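(* For any two distinct triples $(p,m,r)\ne(p',m',r')$ in $\mathcal{TP}_n=\{(p,m,r)\in\mathbb{Z}_{\ge0}^3 : 2p+m+r=n\}$, neither of $\mathscr{Z}_{p,m,r}$ and $\mathscr{Z}_{p',m',r'}$ is contained in the other.
   Context: $\mathscr{Z}_n=\{(A,B)\in M_n(\mathbb{C})^2 : AB+BA=0\}$ with $GL_n(\mathbb{C})$ acting by simultaneous conjugation. $\mathscr{Z}_{p,m,r}$ is the Zariski closure in $\mathscr{Z}_n$ of the union of the $GL_n$-orbits of all pairs $(A,B)\in\mathscr{Z}_n$ with $A=\mathrm{diag}(a_1,-a_1,\dots,a_p,-a_p,a_{p+1},\dots,a_{p+m},0,\dots,0)$ ($r$ zeros), where $a_i\in\mathbb{C}^*$ and $a_i\ne\pm a_j$ for $i\ne j$. *)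

theory Defs
  imports "HOL-Analysis.Analysis"
begin

type_synonym 'n cmat = "complex ^ 'n ^ 'n"

definition anticomm_pairs :: "('n::finite cmat \<times> 'n cmat) set" where
  "anticomm_pairs = {(A, B). A ** B + B ** A = 0}"

inductive_set poly_fun :: "('n::finite cmat \<times> 'n cmat \<Rightarrow> complex) set" where
  const: "(\<lambda>_. c) \<in> poly_fun"
| coordA: "(\<lambda>(A, B). A $ i $ j) \<in> poly_fun"
| coordB: "(\<lambda>(A, B). B $ i $ j) \<in> poly_fun"
| add: "f \<in> poly_fun \<Longrightarrow> g \<in> poly_fun \<Longrightarrow> (\<lambda>x. f x + g x) \<in> poly_fun"
| mult: "f \<in> poly_fun \<Longrightarrow> g \<in> poly_fun \<Longrightarrow> (\<lambda>x. f x * g x) \<in> poly_fun"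

definition zariski_closed :: "('n::finite cmat \<times> 'n cmat) set \<Rightarrow> bool" where
  "zariski_closed X \<longleftrightarrow> (\<exists>F. F \<subseteq> poly_fun \<and> X = {x. \<forall>f\<in>F. f x = 0})"

definition zariski_closure_in_Z :: "('n::finite cmat \<times> 'n cmat) set \<Rightarrow> ('n cmat \<times> 'n cmat) set" where
  "zariski_closure_in_Z S = anticomm_pairs \<inter> \<Inter>{C. zariski_closed C \<and> S \<subseteq> C}"

definition conj_pair :: "'n::finite cmat \<Rightarrow> 'n cmat \<times> 'n cmat \<Rightarrow> 'n cmat \<times> 'n cmat" where
  "conj_pair g x = (g ** fst x ** matrix_inv g, g ** snd x ** matrix_inv g)"

definition GL_orbit :: "'n::finite cmat \<times> 'n cmat \<Rightarrow> ('n cmat \<times> 'n cmat) set" where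
  "GL_orbit x = {conj_pair g x | g. invertible g}"

text \<open>The k-th (0-based) diagonal entry of
  diag(a_1,-a_1,...,a_p,-a_p,a_{p+1},...,a_{p+m},0,...,0), with a_{i+1} written a i.\<close>
definition diag_entry :: "nat \<Rightarrow> nat \<Rightarrow> (nat \<Rightarrow> complex) \<Rightarrow> nat \<Rightarrow> complex" where
  "diag_entry p m a k =
     (if k < 2 * p then (if even k then a (k div 2) else - a (k div 2))
      else if k < 2 * p + m then a (k - p) else 0)"

definition admissible :: "nat \<Rightarrow> nat \<Rightarrow> (nat \<Rightarrow> complex) \<Rightarrow> bool" where
  "admissible p m a \<longleftrightarrow> (\<forall>i < p + m. a i \<noteq> 0) \<and>
     (\<forall>i < p + m. \<forall>j < p + m. i \<noteq> j \<longrightarrow> a i \<noteq> a j \<and> a i \<noteq> - a j)"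

text \<open>The diagonal matrices of type (p,m,r), with respect to an enumeration
  idx of the index type by {0..<n} (any enumeration: the union of orbits does not depend on it).\<close>
definition type_diag :: "nat \<Rightarrow> nat \<Rightarrow> nat \<Rightarrow> 'n::finite cmat set" where
  "type_diag p m r = {D. 2 * p + m + r = CARD('n) \<and>
     (\<exists>idx a. bij_betw idx (UNIV :: 'n set) {..<CARD('n)} \<and> admissible p m a \<and>
        (\<forall>i j. D $ i $ j = (if i = j then diag_entry p m a (idx i) else 0)))}"

definition Zpmr :: "nat \<Rightarrow> nat \<Rightarrow> nat \<Rightarrow> ('n::finite cmat \<times> 'n cmat) set" where
  "Zpmr p m r = zariski_closure_in_Z
     (\<Union>{GL_orbit (A, B) | A B. (A, B) \<in> anticomm_pairs \<and> A \<in> type_diag p m r})"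

definition TP :: "nat \<Rightarrow> (nat \<times> nat \<times> nat) set" where
  "TP n = {(p, m, r). 2 * p + m + r = n}"

end

theory Submission
  imports Defs "Jordan_Normal_Form.Schur_Decomposition"
begin


lemma poly_as_sum_lt:
  fixes p :: "complex poly"
  assumes "degree p < N"
  shows "poly p x = (\<Sum>j<N. coeff p j * x ^ j)"
proof -
  have "poly p x = (\<Sum>j\<le>degree p. coeff p j * x ^ j)" by (rule poly_altdef)
  also have "\<dots> = (\<Sum>j<N. coeff p j * x ^ j)"
    by (rule sum.mono_neutral_left) (use assms in \<open>auto simp: coeff_eq_0\<close>)
  finally show ?thesis .
qed

lemma vand_zero:
  fixes x z :: "nat \<Rightarrow> complex"
  assumes inj: "inj_on x {..<N}" and h: "\<forall>i<N. (\<Sum>l<N. z l * x l ^ i) = 0"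
  shows "\<forall>m<N. z m = 0"
proof (intro allI impI)
  fix m assume m: "m < N"
  define L where "L = (\<Prod>l\<in>{..<N}-{m}. [:- x l, 1:])"
  have degL: "degree L = N - 1"
    unfolding L_def using m by (subst degree_prod_eq_sum_degree) auto
  have "degree L < N" using degL m by simp
  hence pl: "\<And>y. poly L y = (\<Sum>i<N. coeff L i * y ^ i)" by (rule poly_as_sum_lt)
  have "0 = (\<Sum>i<N. coeff L i * (\<Sum>l<N. z l * x l ^ i))" using h by simp
  also have "\<dots> = (\<Sum>l<N. z l * (\<Sum>i<N. coeff L i * x l ^ i))"
    by (simp add: sum_distrib_left sum_distrib_right mult_ac) (rule sum.swap)
  also have "\<dots> = (\<Sum>l<N. z l * poly L (x l))" by (simp add: pl)
  also have "\<dots> = z m * poly L (x m)"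
  proof (rule sum.mono_neutral_right[of "{..<N}" "{m}", simplified])
    show "m < N" by fact
  next
    show "\<forall>i\<in>{..<N} - {m}. z i * poly L (x i) = 0"
      unfolding L_def by (auto simp: poly_prod)
  qed
  finally have e: "z m * poly L (x m) = 0" by simp
  have "poly L (x m) \<noteq> 0"
    unfolding L_def poly_prod using inj m by (auto simp: inj_on_def)
  with e show "z m = 0" by simp
qed

definition hank :: "nat \<Rightarrow> (nat \<Rightarrow> complex) \<Rightarrow> complex Matrix.mat" where
  "hank N w = Matrix.mat N N (\<lambda>(i,j). w (i+j))"

lemma hank_carrier: "hank N w \<in> carrier_mat N N" by (simp add: hank_def)

lemma hank_mult_vec:
  assumes "i < N" "v \<in> carrier_vec N"
  shows "(hank N w *\<^sub>v v) $ i = (\<Sum>j<N. w (i+j) * v $ j)"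
  using assms by (simp add: hank_def scalar_prod_def atLeast0LessThan)

lemma hank_zero:
  assumes s: "s' < N" and w: "\<forall>k. w k = (\<Sum>l<s'. c l * x l ^ k)"
  shows "Determinant.det (hank N w) = 0"
proof -
  define q where "q = (\<Prod>l<s'. [:- x l, 1:])"
  have degq: "degree q = s'" unfolding q_def by (subst degree_prod_eq_sum_degree) auto
  have cq: "coeff q s' = 1"
  proof -
    have "monic q" unfolding q_def by (intro monic_prod) auto
    thus ?thesis using degq by simp
  qed
  define v where "v = Matrix.vec N (\<lambda>j. coeff q j)"
  have vc: "v \<in> carrier_vec N" by (simp add: v_def)
  have vnz: "v \<noteq> 0\<^sub>v N"
  proof
    assume "v = 0\<^sub>v N"
    hence "v $ s' = 0" using s by simp
    thus False using s cq by (simp add: v_def)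
  qed
  have pq: "\<And>y. poly q y = (\<Sum>j<N. coeff q j * y ^ j)" by (rule poly_as_sum_lt) (use degq s in auto)
  have "hank N w *\<^sub>v v = 0\<^sub>v N"
  proof (rule eq_vecI)
    fix i assume i: "i < dim_vec (0\<^sub>v N :: complex Matrix.vec)"
    hence i': "i < N" by simp
    have "(hank N w *\<^sub>v v) $ i = (\<Sum>j<N. w (i+j) * coeff q j)"
      using hank_mult_vec[OF i' vc] by (simp add: v_def)
    also have "\<dots> = (\<Sum>j<N. \<Sum>l<s'. c l * x l ^ i * (coeff q j * x l ^ j))"
      by (simp add: w sum_distrib_left sum_distrib_right power_add mult_ac)
    also have "\<dots> = (\<Sum>l<s'. c l * x l ^ i * (\<Sum>j<N. coeff q j * x l ^ j))"
      by (simp add: sum_distrib_left) (rule sum.swap)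
    also have "\<dots> = (\<Sum>l<s'. c l * x l ^ i * poly q (x l))" by (simp add: pq)
    also have "\<dots> = 0" by (rule sum.neutral) (auto simp: q_def poly_prod)
    finally show "(hank N w *\<^sub>v v) $ i = 0\<^sub>v N $ i" using i' by simp
  qed (auto simp: hank_def)
  thus ?thesis using det_0_iff_vec_prod_zero[OF hank_carrier] vc vnz by blast
qed

lemma hank_nonzero:
  assumes w: "\<forall>k. w k = (\<Sum>l<N. c l * x l ^ k)" and inj: "inj_on x {..<N}"
    and c: "\<forall>l<N. c l \<noteq> 0"
  shows "Determinant.det (hank N w) \<noteq> 0"
proof
  assume "Determinant.det (hank N w) = 0"
  then obtain v where vc: "v \<in> carrier_vec N" and vnz: "v \<noteq> 0\<^sub>v N"
    and hv: "hank N w *\<^sub>v v = 0\<^sub>v N"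
    using det_0_iff_vec_prod_zero[OF hank_carrier] by blast
  define P where "P = (\<Sum>j<N. Polynomial.monom (v $ j) j)"
  have pP: "\<And>y. poly P y = (\<Sum>j<N. v $ j * y ^ j)"
    by (simp add: P_def poly_sum poly_monom)
  have cP: "\<And>j. j < N \<Longrightarrow> coeff P j = v $ j"
    by (simp add: P_def coeff_sum coeff_monom)
  have "\<forall>i<N. (\<Sum>l<N. (c l * poly P (x l)) * x l ^ i) = 0"
  proof (intro allI impI)
    fix i assume i: "i < N"
    have "0 = (hank N w *\<^sub>v v) $ i" using hv i by simp
    also have "\<dots> = (\<Sum>j<N. w (i+j) * v $ j)" by (rule hank_mult_vec[OF i vc])
    also have "\<dots> = (\<Sum>j<N. \<Sum>l<N. c l * x l ^ i * (v $ j * x l ^ j))"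
      by (simp add: w sum_distrib_left sum_distrib_right power_add mult_ac)
    also have "\<dots> = (\<Sum>l<N. c l * x l ^ i * (\<Sum>j<N. v $ j * x l ^ j))"
      by (simp add: sum_distrib_left) (rule sum.swap)
    also have "\<dots> = (\<Sum>l<N. (c l * poly P (x l)) * x l ^ i)" by (simp add: pP mult_ac)
    finally show "(\<Sum>l<N. (c l * poly P (x l)) * x l ^ i) = 0" by simp
  qed
  from vand_zero[OF inj this] c have roots: "\<forall>l<N. poly P (x l) = 0" by simp
  have "P = 0"
  proof (rule ccontr)
    assume P0: "P \<noteq> 0"
    have "x ` {..<N} \<subseteq> {y. poly P y = 0}" using roots by auto
    hence "card (x ` {..<N}) \<le> card {y. poly P y = 0}"
      by (intro card_mono) (use poly_roots_finite[OF P0] in auto)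
    also have "\<dots> \<le> degree P" by (rule card_poly_roots_bound[OF P0])
    also have "degree P < N"
    proof -
      have "degree P \<le> N - 1" unfolding P_def
        by (rule degree_sum_le) (auto intro: order.trans[OF degree_monom_le])
      moreover have "N > 0" using vc vnz by (cases N) auto
      ultimately show ?thesis by simp
    qed
    finally show False using card_image[OF inj] by simp
  qed
  hence "v = 0\<^sub>v N" using cP vc by (intro eq_vecI) auto
  with vnz show False by simp
qed




abbreviation I1 :: "('a::semiring_1)^'n^'n" where "I1 \<equiv> Finite_Cartesian_Product.mat 1"

fun mpow :: "('a::semiring_1)^'n^'n \<Rightarrow> nat \<Rightarrow> 'a^'n^'n" where
  "mpow M 0 = I1"
| "mpow M (Suc k) = mpow M k ** M"

definition mtr :: "nat \<Rightarrow> complex Matrix.mat \<Rightarrow> complex" where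
  "mtr n X = (\<Sum>a<n. X $$ (a,a))"

lemma mtr_comm:
  assumes "A \<in> carrier_mat n m" "B \<in> carrier_mat m n"
  shows "mtr n (A * B) = mtr m (B * A)"
proof -
  have "mtr n (A * B) = (\<Sum>a<n. \<Sum>c<m. A $$ (a,c) * B $$ (c,a))"
    using assms by (simp add: mtr_def scalar_prod_def atLeast0LessThan)
  also have "\<dots> = (\<Sum>c<m. \<Sum>a<n. B $$ (c,a) * A $$ (a,c))"
    by (subst sum.swap) (simp add: mult_ac)
  also have "\<dots> = mtr m (B * A)"
    using assms by (simp add: mtr_def scalar_prod_def atLeast0LessThan)
  finally show ?thesis .
qed

lemma upper_tri_mult:
  assumes "X \<in> carrier_mat n n" "Y \<in> carrier_mat n n" "upper_triangular X" "upper_triangular Y"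
  shows "upper_triangular (X * Y) \<and> (\<forall>a<n. (X * Y) $$ (a,a) = X $$ (a,a) * Y $$ (a,a))"
proof
  show "upper_triangular (X * Y)"
  proof (rule upper_triangularI)
    fix i j assume ij: "j < i" "i < dim_row (X * Y)"
    have "(X * Y) $$ (i,j) = (\<Sum>c<n. X $$ (i,c) * Y $$ (c,j))"
      using assms ij by (simp add: scalar_prod_def atLeast0LessThan)
    also have "\<dots> = 0"
    proof (rule sum.neutral, intro ballI)
      fix c assume c: "c \<in> {..<n}"
      show "X $$ (i,c) * Y $$ (c,j) = 0"
      proof (cases "c < i")
        case True thus ?thesis using assms ij by (auto dest!: upper_triangularD)
      next
        case False
        have "Y $$ (c,j) = 0"
          using upper_triangularD[OF assms(4), of j c] assms(2) ij c False by auto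
        thus ?thesis by simp
      qed
    qed
    finally show "(X * Y) $$ (i,j) = 0" .
  qed
next
  show "\<forall>a<n. (X * Y) $$ (a,a) = X $$ (a,a) * Y $$ (a,a)"
  proof (intro allI impI)
    fix a assume a: "a < n"
    have "(X * Y) $$ (a,a) = (\<Sum>c<n. X $$ (a,c) * Y $$ (c,a))"
      using assms a by (simp add: scalar_prod_def atLeast0LessThan)
    also have "\<dots> = X $$ (a,a) * Y $$ (a,a)"
    proof (rule sum.mono_neutral_right[of "{..<n}" "{a}", simplified])
      show "a < n" by fact
      show "\<forall>i\<in>{..<n} - {a}. X $$ (a, i) * Y $$ (i, a) = 0"
      proof
        fix c assume c: "c \<in> {..<n} - {a}"
        show "X $$ (a, c) * Y $$ (c, a) = 0"
        proof (cases "c < a")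
          case True thus ?thesis using assms a by (auto dest!: upper_triangularD)
        next
          case False hence "a < c" using c by auto
          thus ?thesis using assms a c by (auto dest!: upper_triangularD)
        qed
      qed
    qed
    finally show "(X * Y) $$ (a,a) = X $$ (a,a) * Y $$ (a,a)" .
  qed
qed

lemma upper_tri_pow:
  assumes "T \<in> carrier_mat n n" "upper_triangular T"
  shows "upper_triangular (T ^\<^sub>m k) \<and> (\<forall>a<n. (T ^\<^sub>m k) $$ (a,a) = (T $$ (a,a)) ^ k)"
proof (induction k)
  case 0 thus ?case using assms by auto
next
  case (Suc k)
  have c: "T ^\<^sub>m k \<in> carrier_mat n n" using assms by simp
  from upper_tri_mult[OF c assms(1) _ assms(2)] Suc show ?case by (auto simp: power_commutes)
qed

lemma jnf_power_sums:
  fixes J :: "complex Matrix.mat"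
  assumes J: "J \<in> carrier_mat s s"
  shows "\<exists>lam. \<forall>k. mtr s (J ^\<^sub>m k) = (\<Sum>l<s. lam l ^ k)"
proof -
  obtain as where "char_poly J = (\<Prod>a\<leftarrow>as. [:- a, 1:])"
    using char_poly_factorized[OF J] by blast
  from schur_decomposition_exists[OF J this] obtain T where
    T: "T \<in> carrier_mat s s" "upper_triangular T" "similar_mat J T" by blast
  then obtain P Q where w: "similar_mat_wit J T P Q" unfolding similar_mat_def by blast
  hence PQ: "P \<in> carrier_mat s s" "Q \<in> carrier_mat s s" "Q * P = 1\<^sub>m s"
    using J unfolding similar_mat_wit_def Let_def by auto
  show ?thesis
  proof (intro exI allI)
    fix k
    have Tk: "T ^\<^sub>m k \<in> carrier_mat s s" using T by simp
    have "mtr s (J ^\<^sub>m k) = mtr s ((P * T ^\<^sub>m k) * Q)"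
      using similar_mat_wit_pow_id[OF w, of k] by simp
    also have "\<dots> = mtr s (Q * (P * T ^\<^sub>m k))"
      by (rule mtr_comm) (use PQ Tk in auto)
    also have "Q * (P * T ^\<^sub>m k) = (Q * P) * T ^\<^sub>m k"
      using PQ Tk by (simp add: assoc_mult_mat[symmetric])
    also have "\<dots> = T ^\<^sub>m k" using PQ Tk by (simp add: left_mult_one_mat[OF Tk])
    also have "mtr s (T ^\<^sub>m k) = (\<Sum>l<s. (T $$ (l,l)) ^ k)"
      using upper_tri_pow[OF T(1,2), of k] by (simp add: mtr_def)
    finally show "mtr s (J ^\<^sub>m k) = (\<Sum>l<s. (T $$ (l,l)) ^ k)" .
  qed
qed

lemma supported_power_sums:
  fixes N :: "complex^'n^'n"
  assumes supp: "\<forall>i j. N$i$j \<noteq> 0 \<longrightarrow> i \<in> S \<and> j \<in> S"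
  shows "\<exists>lam. \<forall>k>0. trace (mpow N k) = (\<Sum>l<card S. lam l ^ k)"
proof -
  define s where "s = card S"
  have fS: "finite S" by simp
  obtain h where h: "bij_betw h {0..<s} S" using ex_bij_betw_nat_finite[OF fS] s_def by blast
  have hS: "\<And>a. a < s \<Longrightarrow> h a \<in> S" using h by (auto simp: bij_betw_def)
  have hinj: "\<And>a b. a < s \<Longrightarrow> b < s \<Longrightarrow> h a = h b \<longleftrightarrow> a = b"
    using h by (auto simp: bij_betw_def inj_on_def)
  have reidx: "(\<Sum>l\<in>S. F l) = (\<Sum>c<s. F (h c))" for F
    using sum.reindex_bij_betw[OF h, of F] by (simp add: atLeast0LessThan)
  define J where "J = Matrix.mat s s (\<lambda>(a,b). N $ h a $ h b)"
  have J: "J \<in> carrier_mat s s" by (simp add: J_def)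
  have claim: "\<forall>a b. a < s \<longrightarrow> b < s \<longrightarrow> mpow N k $ h a $ h b = (J ^\<^sub>m k) $$ (a,b)" for k
  proof (induction k)
    case 0 show ?case using J by (auto simp: Finite_Cartesian_Product.mat_def hinj)
  next
    case (Suc k)
    show ?case
    proof (intro allI impI)
      fix a b assume ab: "a < s" "b < s"
      have "mpow N (Suc k) $ h a $ h b = (\<Sum>l\<in>UNIV. mpow N k $ h a $ l * N $ l $ h b)"
        by (simp add: matrix_matrix_mult_def)
      also have "\<dots> = (\<Sum>l\<in>S. mpow N k $ h a $ l * N $ l $ h b)"
        by (rule sum.mono_neutral_right) (use supp in auto)
      also have "\<dots> = (\<Sum>c<s. mpow N k $ h a $ h c * N $ h c $ h b)" by (rule reidx)
      also have "\<dots> = (\<Sum>c<s. (J ^\<^sub>m k) $$ (a,c) * J $$ (c,b))"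
        using Suc ab by (intro sum.cong) (auto simp: J_def)
      also have "\<dots> = (J ^\<^sub>m k * J) $$ (a,b)"
        using J ab by (simp add: scalar_prod_def atLeast0LessThan)
      finally show "mpow N (Suc k) $ h a $ h b = (J ^\<^sub>m (Suc k)) $$ (a,b)" by simp
    qed
  qed
  obtain lam where lam: "\<forall>k. mtr s (J ^\<^sub>m k) = (\<Sum>l<s. lam l ^ k)"
    using jnf_power_sums[OF J] by blast
  show ?thesis
  proof (intro exI allI impI)
    fix k :: nat assume k: "k > 0"
    then obtain k' where k': "k = Suc k'" by (cases k) auto
    have "trace (mpow N k) = (\<Sum>i\<in>UNIV. mpow N k $ i $ i)" by (simp add: trace_def)
    also have "\<dots> = (\<Sum>i\<in>S. mpow N k $ i $ i)"
    proof (rule sum.mono_neutral_right)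
      show "\<forall>i\<in>UNIV - S. mpow N k $ i $ i = 0"
        using supp by (auto simp: k' matrix_matrix_mult_def intro!: sum.neutral)
    qed auto
    also have "\<dots> = (\<Sum>c<s. mpow N k $ h c $ h c)" by (rule reidx)
    also have "\<dots> = mtr s (J ^\<^sub>m k)" using claim by (simp add: mtr_def)
    finally show "trace (mpow N k) = (\<Sum>l<card S. lam l ^ k)" using lam s_def by simp
  qed
qed




lemma pf_const: "(\<lambda>_. c) \<in> poly_fun" by (rule poly_fun.const)

lemma pf_fst:
  fixes i j :: "'n::finite"
  shows "(\<lambda>x::'n cmat \<times> 'n cmat. fst x $ i $ j) \<in> poly_fun"
proof -
  have "(\<lambda>(A::'n::finite cmat, B::'n cmat). A $ i $ j) \<in> poly_fun" by (rule poly_fun.coordA)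
  moreover have "(\<lambda>(A::'n::finite cmat, B::'n cmat). A $ i $ j) = (\<lambda>x. fst x $ i $ j)" by auto
  ultimately show ?thesis by simp
qed

lemma pf_snd:
  fixes i j :: "'n::finite"
  shows "(\<lambda>x::'n cmat \<times> 'n cmat. snd x $ i $ j) \<in> poly_fun"
proof -
  have "(\<lambda>(A::'n::finite cmat, B::'n cmat). B $ i $ j) \<in> poly_fun" by (rule poly_fun.coordB)
  moreover have "(\<lambda>(A::'n::finite cmat, B::'n cmat). B $ i $ j) = (\<lambda>x. snd x $ i $ j)" by auto
  ultimately show ?thesis by simp
qed

lemma pf_sum:
  assumes "finite A" "\<And>a. a \<in> A \<Longrightarrow> f a \<in> poly_fun"
  shows "(\<lambda>x. \<Sum>a\<in>A. f a x) \<in> poly_fun"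
  using assms
proof (induction A rule: finite_induct)
  case empty show ?case using pf_const[of 0] by simp
next
  case (insert b A)
  have "(\<lambda>x. f b x + (\<Sum>a\<in>A. f a x)) \<in> poly_fun"
    by (rule poly_fun.add) (use insert in auto)
  thus ?case using insert by simp
qed

lemma pf_prod:
  assumes "finite A" "\<And>a. a \<in> A \<Longrightarrow> f a \<in> poly_fun"
  shows "(\<lambda>x. \<Prod>a\<in>A. f a x) \<in> poly_fun"
  using assms
proof (induction A rule: finite_induct)
  case empty show ?case using pf_const[of 1] by simp
next
  case (insert b A)
  have "(\<lambda>x. f b x * (\<Prod>a\<in>A. f a x)) \<in> poly_fun"
    by (rule poly_fun.mult) (use insert in auto)
  thus ?case using insert by simp
qed

lemma pf_cmult: "f \<in> poly_fun \<Longrightarrow> (\<lambda>x. c * f x) \<in> poly_fun"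
  by (rule poly_fun.mult[OF pf_const])

definition matpf :: "('n::finite cmat \<times> 'n cmat \<Rightarrow> 'n cmat) \<Rightarrow> bool" where
  "matpf F \<longleftrightarrow> (\<forall>i j. (\<lambda>x. F x $ i $ j) \<in> poly_fun)"

lemma matpf_fst: "matpf fst" by (simp add: matpf_def pf_fst)
lemma matpf_snd: "matpf snd" by (simp add: matpf_def pf_snd)

lemma matpf_mult: "matpf F \<Longrightarrow> matpf G \<Longrightarrow> matpf (\<lambda>x. F x ** G x)"
  unfolding matpf_def matrix_matrix_mult_def
  by (auto intro!: pf_sum poly_fun.mult)

lemma matpf_I1: "matpf (\<lambda>x. I1)"
  unfolding matpf_def Finite_Cartesian_Product.mat_def by (auto intro: pf_const)

lemma matpf_mpow: "matpf F \<Longrightarrow> matpf (\<lambda>x. mpow (F x) k)"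
  by (induction k) (auto intro: matpf_I1 matpf_mult)

lemma pf_trace: "matpf F \<Longrightarrow> (\<lambda>x. trace (F x)) \<in> poly_fun"
  unfolding matpf_def trace_def by (auto intro!: pf_sum)

lemma pf_hank:
  assumes "\<And>k. u k \<in> poly_fun"
  shows "(\<lambda>x. Determinant.det (hank N (\<lambda>k. u k x))) \<in> poly_fun"
proof -
  have e: "(\<lambda>x. Determinant.det (hank N (\<lambda>k. u k x))) =
     (\<lambda>x. \<Sum>p\<in>{p. p permutes {0..<N}}. signof p * (\<Prod>i\<in>{0..<N}. u (i + p i) x))"
  proof
    fix x
    show "Determinant.det (hank N (\<lambda>k. u k x)) =
      (\<Sum>p\<in>{p. p permutes {0..<N}}. signof p * (\<Prod>i\<in>{0..<N}. u (i + p i) x))"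
      unfolding det_def'[OF hank_carrier]
    proof (intro sum.cong refl arg_cong2[where f="(*)"] prod.cong)
      fix p i assume p: "p \<in> {p. p permutes {0..<N}}" and i: "i \<in> {0..<N}"
      have "p i < N" using p i permutes_in_image[of p "{0..<N}" i] by auto
      thus "hank N (\<lambda>k. u k x) $$ (i, p i) = u (i + p i) x" using i by (simp add: hank_def)
    qed
  qed
  show ?thesis unfolding e
    by (intro pf_sum pf_cmult pf_prod assms) (auto simp: finite_permutations)
qed

definition cj :: "'n::finite cmat \<Rightarrow> 'n cmat \<Rightarrow> 'n cmat" where
  "cj g X = g ** X ** matrix_inv g"

lemma inv_props:
  fixes g :: "'n::finite cmat"
  assumes "invertible g"
  shows "g ** matrix_inv g = I1" "matrix_inv g ** g = I1"
proof -
  from assms obtain A' :: "'n cmat" where "g ** A' = I1 \<and> A' ** g = I1" unfolding invertible_def by blast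
  hence "g ** matrix_inv g = I1 \<and> matrix_inv g ** g = I1"
    unfolding matrix_inv_def by (rule someI)
  thus "g ** matrix_inv g = I1" "matrix_inv g ** g = I1" by auto
qed

lemma cj_mult:
  assumes "invertible g"
  shows "cj g X ** cj g Y = cj g (X ** Y)"
proof -
  have "cj g X ** cj g Y = (g ** X) ** ((matrix_inv g ** g) ** (Y ** matrix_inv g))"
    by (simp add: cj_def matrix_mul_assoc)
  also have "\<dots> = (g ** X) ** (Y ** matrix_inv g)" using inv_props[OF assms] by simp
  also have "\<dots> = cj g (X ** Y)" by (simp add: cj_def matrix_mul_assoc)
  finally show ?thesis .
qed

lemma cj_mpow:
  assumes "invertible g"
  shows "mpow (cj g X) k = cj g (mpow X k)"
proof (induction k)
  case 0 show ?case using inv_props[OF assms] by (simp add: cj_def)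
next
  case (Suc k) thus ?case by (simp add: cj_mult[OF assms])
qed

lemma cj_trace:
  assumes "invertible g"
  shows "trace (cj g X) = trace X"
proof -
  have "trace (cj g X) = trace (matrix_inv g ** (g ** X))" unfolding cj_def by (rule trace_mul_sym)
  also have "\<dots> = trace X" using inv_props[OF assms] by (simp add: matrix_mul_assoc)
  finally show ?thesis .
qed

lemma conj_pair_cj: "conj_pair g x = (cj g (fst x), cj g (snd x))"
  by (simp add: conj_pair_def cj_def)

definition u1 :: "nat \<Rightarrow> 'n::finite cmat \<times> 'n cmat \<Rightarrow> complex" where
  "u1 k x = trace (mpow (fst x) (2*k+1))"
definition u2 :: "nat \<Rightarrow> 'n::finite cmat \<times> 'n cmat \<Rightarrow> complex" where
  "u2 k x = trace (mpow (fst x) (k+1))"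
definition u3 :: "nat \<Rightarrow> 'n::finite cmat \<times> 'n cmat \<Rightarrow> complex" where
  "u3 k x = trace (snd x ** snd x ** mpow (fst x) (2*k+2))"
definition u5 :: "nat \<Rightarrow> 'n::finite cmat \<times> 'n cmat \<Rightarrow> complex" where
  "u5 k x = trace (mpow (snd x) (2*k+1))"

lemma u_pf: "u1 k \<in> poly_fun" "u2 k \<in> poly_fun" "u3 k \<in> poly_fun" "u5 k \<in> poly_fun"
proof -
  show "u1 k \<in> poly_fun" unfolding u1_def[abs_def]
    by (intro pf_trace matpf_mpow matpf_fst)
  show "u2 k \<in> poly_fun" unfolding u2_def[abs_def]
    by (intro pf_trace matpf_mpow matpf_fst)
  show "u3 k \<in> poly_fun" unfolding u3_def[abs_def]
    by (intro pf_trace matpf_mult matpf_mpow matpf_fst matpf_snd)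
  show "u5 k \<in> poly_fun" unfolding u5_def[abs_def]
    by (intro pf_trace matpf_mpow matpf_snd)
qed

lemma u_inv:
  assumes "invertible g"
  shows "u1 k (conj_pair g x) = u1 k x" "u2 k (conj_pair g x) = u2 k x"
    "u3 k (conj_pair g x) = u3 k x" "u5 k (conj_pair g x) = u5 k x"
  by (simp_all add: u1_def u2_def u3_def u5_def conj_pair_cj cj_mpow[OF assms] cj_mult[OF assms]
      cj_trace[OF assms])




lemma sep:
  fixes u :: "nat \<Rightarrow> 'n::finite cmat \<times> 'n cmat \<Rightarrow> complex" and N :: nat
    and c0 y0 :: "nat \<Rightarrow> complex"
  assumes pf: "\<And>k. u k \<in> poly_fun"
    and inv: "\<And>k g x. invertible g \<Longrightarrow> u k (conj_pair g x) = u k x"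
    and gen: "\<And>A B. (A,B) \<in> anticomm_pairs \<Longrightarrow> A \<in> type_diag p' m' r' \<Longrightarrow>
                \<exists>c y (s'::nat). s' < N \<and> (\<forall>k. u k (A,B) = (\<Sum>l<s'. c l * y l ^ k))"
    and x0: "x0 \<in> Zpmr p m r"
    and v0: "\<forall>k. u k x0 = (\<Sum>l<N. c0 l * y0 l ^ k)" and i0: "inj_on y0 {..<N}"
    and n0: "\<forall>l<N. c0 l \<noteq> 0"
  shows "\<not> (Zpmr p m r :: ('n cmat \<times> 'n cmat) set) \<subseteq> Zpmr p' m' r'"
proof
  assume sub: "(Zpmr p m r :: ('n cmat \<times> 'n cmat) set) \<subseteq> Zpmr p' m' r'"
  define f where "f = (\<lambda>x. Determinant.det (hank N (\<lambda>k. u k x)))"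
  have fpf: "f \<in> poly_fun" unfolding f_def by (rule pf_hank[OF pf])
  define C where "C = {x. \<forall>h\<in>{f}. h x = 0}"
  have Ccl: "zariski_closed C" unfolding zariski_closed_def C_def using fpf by blast
  have Gsub: "\<Union>{GL_orbit (A, B) | (A::'n cmat) B. (A, B) \<in> anticomm_pairs \<and> A \<in> type_diag p' m' r'} \<subseteq> C"
  proof
    fix y assume "y \<in> \<Union>{GL_orbit (A, B) | (A::'n cmat) B. (A, B) \<in> anticomm_pairs \<and> A \<in> type_diag p' m' r'}"
    then obtain A B :: "'n cmat" and g where AB: "(A, B) \<in> anticomm_pairs" "A \<in> type_diag p' m' r'"
      and g: "invertible g" and y: "y = conj_pair g (A,B)"
      unfolding GL_orbit_def by blast
    obtain c yy s' where s': "s' < N" and w: "\<forall>k. u k (A,B) = (\<Sum>l<s'. c l * yy l ^ k)"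
      using gen[OF AB] by blast
    have "f y = Determinant.det (hank N (\<lambda>k. u k (A,B)))"
      unfolding f_def y using inv[OF g] by simp
    also have "\<dots> = 0" by (rule hank_zero[OF s' w])
    finally show "y \<in> C" by (simp add: C_def)
  qed
  have "Zpmr p' m' r' \<subseteq> C"
    unfolding Zpmr_def zariski_closure_in_Z_def using Ccl Gsub by blast
  with sub x0 have "x0 \<in> C" by blast
  moreover have "f x0 \<noteq> 0" unfolding f_def
    using hank_nonzero[where w="\<lambda>k. u k x0" and N=N and c=c0 and x=y0] v0 i0 n0 by simp
  ultimately show False by (simp add: C_def)
qed

lemma invertible_I1: "invertible (I1 :: 'n::finite cmat)"
  unfolding invertible_def by (rule exI[of _ I1]) simp

lemma matrix_inv_I1: "matrix_inv (I1 :: 'n::finite cmat) = I1"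
  using inv_props(1)[OF invertible_I1] by simp

lemma in_Zpmr:
  fixes D B :: "'n::finite cmat"
  assumes "(D,B) \<in> anticomm_pairs" "D \<in> type_diag p m r"
  shows "(D,B) \<in> Zpmr p m r"
proof -
  have "(D,B) = conj_pair I1 (D,B)" by (simp add: conj_pair_def matrix_inv_I1)
  hence "(D,B) \<in> GL_orbit (D,B)" unfolding GL_orbit_def using invertible_I1 by blast
  hence "(D,B) \<in> \<Union>{GL_orbit (A, B) | (A::'n::finite cmat) B. (A, B) \<in> anticomm_pairs \<and> A \<in> type_diag p m r}"
    using assms by blast
  thus ?thesis unfolding Zpmr_def zariski_closure_in_Z_def using assms(1) by blast
qed

lemma fcp_vec_eqI:
  fixes x y :: "'a^'n"
  shows "(\<And>i. x $ i = y $ i) \<Longrightarrow> x = y"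
  by (simp add: Finite_Cartesian_Product.vec_eq_iff)

definition dg :: "('n::finite \<Rightarrow> complex) \<Rightarrow> 'n cmat" where
  "dg d = (\<chi> i j. if i = j then d i else 0)"

lemma dg_mult_left: "(dg d ** X) $ i $ j = d i * X $ i $ j"
proof -
  have "(dg d ** X) $ i $ j = (\<Sum>l\<in>UNIV. (if i = l then d i else 0) * X $ l $ j)"
    by (simp add: dg_def matrix_matrix_mult_def)
  also have "\<dots> = (\<Sum>l\<in>UNIV. if l = i then d i * X $ i $ j else 0)"
    by (rule sum.cong) auto
  also have "\<dots> = d i * X $ i $ j" by simp
  finally show ?thesis .
qed

lemma dg_mult_right: "(X ** dg d) $ i $ j = X $ i $ j * d j"
proof -
  have "(X ** dg d) $ i $ j = (\<Sum>l\<in>UNIV. X $ i $ l * (if l = j then d l else 0))"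
    by (simp add: dg_def matrix_matrix_mult_def)
  also have "\<dots> = (\<Sum>l\<in>UNIV. if l = j then X $ i $ j * d j else 0)"
    by (rule sum.cong) auto
  also have "\<dots> = X $ i $ j * d j" by simp
  finally show ?thesis .
qed

lemma dg_index: "dg d $ i $ j = (if i = j then d i else 0)" by (simp add: dg_def)

lemma mpow_dg: "mpow (dg d) k = dg (\<lambda>i. d i ^ k)"
proof (induction k)
  case 0 show ?case by (simp add: dg_def Finite_Cartesian_Product.mat_def)
next
  case (Suc k)
  show ?case by (simp add: Suc, intro fcp_vec_eqI) (simp add: dg_mult_right dg_index mult.commute)
qed

lemma trace_dg: "trace (dg d) = (\<Sum>i\<in>UNIV. d i)" by (simp add: trace_def dg_def)

lemma trace_mult_dg: "trace (X ** dg d) = (\<Sum>i\<in>UNIV. X $ i $ i * d i)"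
  by (simp add: trace_def dg_mult_right)

lemma anticomm_dg:
  fixes d :: "'n::finite \<Rightarrow> complex"
  shows "(dg d, B) \<in> anticomm_pairs \<longleftrightarrow> (\<forall>i j. (d i + d j) * B $ i $ j = 0)"
proof -
  have "(dg d, B) \<in> anticomm_pairs \<longleftrightarrow> (\<forall>i j::'n. (dg d ** B + B ** dg d) $ i $ j = 0)"
    by (simp add: anticomm_pairs_def Finite_Cartesian_Product.vec_eq_iff)
  also have "\<dots> \<longleftrightarrow> (\<forall>i j. (d i + d j) * B $ i $ j = 0)"
    by (simp add: dg_mult_left dg_mult_right algebra_simps)
  finally show ?thesis .
qed

lemma type_diagE:
  assumes "D \<in> type_diag p m r"
  obtains idx a where "2 * p + m + r = CARD('n::finite)"
    "bij_betw idx (UNIV :: 'n set) {..<CARD('n)}" "admissible p m a"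
    "D = dg (\<lambda>i. diag_entry p m a (idx i))"
proof -
  from assms obtain idx a where h: "2 * p + m + r = CARD('n)" "bij_betw idx (UNIV :: 'n set) {..<CARD('n)}"
    "admissible p m a" "\<forall>i j. D $ i $ j = (if i = j then diag_entry p m a (idx i) else 0)"
    unfolding type_diag_def by blast
  have "D = dg (\<lambda>i. diag_entry p m a (idx i))" unfolding dg_def using h(4) by (intro fcp_vec_eqI) simp
  with h that show ?thesis by blast
qed

lemma type_diagI:
  assumes "2 * p + m + r = CARD('n::finite)"
    "bij_betw idx (UNIV :: 'n set) {..<CARD('n)}" "admissible p m a"
  shows "dg (\<lambda>i. diag_entry p m a (idx i)) \<in> type_diag p m r"
  unfolding type_diag_def using assms by (auto simp: dg_def)

lemma sum_reidx:
  assumes "bij_betw idx (UNIV :: 'n::finite set) {..<n}"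
  shows "(\<Sum>i\<in>UNIV. F (idx i)) = (\<Sum>t<n. F t)"
  using sum.reindex_bij_betw[OF assms, of F] by simp

lemma sum_pairs:
  fixes p :: nat and g :: "nat \<Rightarrow> 'a::comm_monoid_add"
  shows "(\<Sum>t<2*p. g t) = (\<Sum>q<p. g (2*q) + g (2*q+1))"
proof (induction p)
  case 0 show ?case by simp
next
  case (Suc p)
  have "(\<Sum>t<2*Suc p. g t) = (\<Sum>t<2*p. g t) + g (2*p) + g (2*p+1)"
    by (simp add: numeral_2_eq_2)
  thus ?case using Suc by (simp add: add.assoc)
qed

lemma sum_split_de:
  fixes p m :: nat and g :: "nat \<Rightarrow> 'a::comm_monoid_add"
  shows "(\<Sum>t<2*p+m. g t) = (\<Sum>q<p. g (2*q) + g (2*q+1)) + (\<Sum>j<m. g (2*p+j))"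
proof -
  have "(\<Sum>t<2*p+m. g t) = (\<Sum>t<2*p. g t) + (\<Sum>j<m. g (2*p+j))"
  proof (induction m)
    case 0 show ?case by simp
  next
    case (Suc m) thus ?case by (simp add: add.assoc)
  qed
  thus ?thesis by (simp add: sum_pairs)
qed

lemma sum_cut:
  fixes M n :: nat
  assumes "\<And>t. t \<ge> M \<Longrightarrow> t < n \<Longrightarrow> g t = 0" "M \<le> n"
  shows "(\<Sum>t<n. g t) = (\<Sum>t<M. g t)"
proof -
  have u: "{..<n} = {..<M} \<union> {M..<n}" using assms(2) by auto
  have "(\<Sum>t<n. g t) = (\<Sum>t<M. g t) + (\<Sum>t\<in>{M..<n}. g t)"
    unfolding u by (rule sum.union_disjoint) auto
  also have "(\<Sum>t\<in>{M..<n}. g t) = 0" using assms(1) by (intro sum.neutral) auto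
  finally show ?thesis by simp
qed

lemma de_pair: "q < p \<Longrightarrow> diag_entry p m a (2*q) = a q"
  "q < p \<Longrightarrow> diag_entry p m a (2*q+1) = - a q"
  by (auto simp: diag_entry_def)

lemma de_single: "j < m \<Longrightarrow> diag_entry p m a (2*p+j) = a (p+j)"
  by (auto simp: diag_entry_def)

lemma de_zero: "t \<ge> 2*p+m \<Longrightarrow> diag_entry p m a t = 0"
  by (auto simp: diag_entry_def)

lemma de_nz: "admissible p m a \<Longrightarrow> t < 2*p+m \<Longrightarrow> diag_entry p m a t \<noteq> 0"
  by (auto simp: diag_entry_def admissible_def)

lemma adm_nz: "admissible p m a \<Longrightarrow> i < p+m \<Longrightarrow> a i \<noteq> 0"
  unfolding admissible_def by blast

lemma adm_ne: "admissible p m a \<Longrightarrow> i < p+m \<Longrightarrow> j < p+m \<Longrightarrow> i \<noteq> j \<Longrightarrow> a i \<noteq> a j \<and> a i \<noteq> - a j"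
  unfolding admissible_def by blast

lemma self_neg_zero: "(x::complex) = - x \<Longrightarrow> x = 0"
proof -
  assume "x = - x"
  hence "x + x = 0" by (metis add.right_inverse)
  hence "2 * x = 0" by (simp only: mult_2)
  thus "x = 0" by simp
qed

lemma de_neg:
  assumes adm: "admissible p m a" and j: "j < m"
  shows "diag_entry p m a t \<noteq> - a (p+j)"
proof -
  have apj: "a (p+j) \<noteq> 0" using adm_nz[OF adm, of "p+j"] j by simp
  consider "t < 2*p" | "2*p \<le> t" "t < 2*p+m" | "2*p+m \<le> t" by linarith
  thus ?thesis
  proof cases
    case 1
    have q: "t div 2 < p" using 1 by auto
    have ne: "a (t div 2) \<noteq> a (p+j) \<and> a (t div 2) \<noteq> - a (p+j)"
      by (rule adm_ne[OF adm]) (use q j in auto)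
    have et: "diag_entry p m a t = (if even t then a (t div 2) else - a (t div 2))"
      using 1 by (simp add: diag_entry_def)
    show ?thesis
    proof (cases "even t")
      case True thus ?thesis using et ne by simp
    next
      case False thus ?thesis using et ne by simp
    qed
  next
    case 2
    have et: "diag_entry p m a t = a (t - p)" using 2 by (simp add: diag_entry_def)
    show ?thesis
    proof (cases "t - p = p + j")
      case True
      have "a (p+j) \<noteq> - a (p+j)" using apj self_neg_zero by blast
      thus ?thesis using et True by simp
    next
      case False
      have "a (t-p) \<noteq> - a (p+j)"
        using adm_ne[OF adm, of "t-p" "p+j"] False 2 j by simp
      thus ?thesis using et by simp
    qed
  next
    case 3
    hence "diag_entry p m a t = 0" by (simp add: diag_entry_def)
    thus ?thesis using apj by simp
  qed
qed




lemma pow_odd_split: "(x::complex) ^ (2*k+1) = x * (x^2) ^ k"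
  by (simp add: power_mult[symmetric])

lemma de_pair': "q < p \<Longrightarrow> diag_entry p m a (Suc (2*q)) = - a q"
  by (auto simp: diag_entry_def)

lemma V1:
  fixes idx :: "'n::finite \<Rightarrow> nat"
  assumes bij: "bij_betw idx (UNIV::'n set) {..<CARD('n)}" and n: "2*p+m+r = CARD('n)"
  shows "u1 k (dg (\<lambda>i. diag_entry p m a (idx i)), B) = (\<Sum>j<m. a (p+j) * (a (p+j) ^ 2) ^ k)"
proof -
  let ?e = "diag_entry p m a"
  have "u1 k (dg (\<lambda>i. ?e (idx i)), B) = (\<Sum>i\<in>UNIV. ?e (idx i) ^ (2*k+1))"
    unfolding u1_def fst_conv mpow_dg trace_dg ..
  also have "\<dots> = (\<Sum>t<CARD('n). ?e t ^ (2*k+1))" by (rule sum_reidx[OF bij])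
  also have "\<dots> = (\<Sum>t<2*p+m. ?e t ^ (2*k+1))"
    by (rule sum_cut) (use n in \<open>auto simp: de_zero\<close>)
  also have "\<dots> = (\<Sum>q<p. ?e (2*q) ^ (2*k+1) + ?e (2*q+1) ^ (2*k+1)) + (\<Sum>j<m. ?e (2*p+j) ^ (2*k+1))"
    by (rule sum_split_de)
  also have "(\<Sum>q<p. ?e (2*q) ^ (2*k+1) + ?e (2*q+1) ^ (2*k+1)) = 0"
    by (rule sum.neutral) (auto simp: de_pair de_pair' power_minus_even)
  also have "(\<Sum>j<m. ?e (2*p+j) ^ (2*k+1)) = (\<Sum>j<m. a (p+j) * (a (p+j) ^ 2) ^ k)"
  proof (rule sum.cong)
    fix j assume "j \<in> {..<m}"
    hence j: "j < m" by simp
    show "?e (2*p+j) ^ (2*k+1) = a (p+j) * (a (p+j) ^ 2) ^ k"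
      by (simp only: de_single[OF j] pow_odd_split)
  qed simp
  finally show ?thesis by simp
qed

lemma V2:
  fixes idx :: "'n::finite \<Rightarrow> nat"
  assumes bij: "bij_betw idx (UNIV::'n set) {..<CARD('n)}" and n: "2*p+m+r = CARD('n)"
  shows "u2 k (dg (\<lambda>i. diag_entry p m a (idx i)), B) =
    (\<Sum>t<2*p+m. diag_entry p m a t * diag_entry p m a t ^ k)"
proof -
  let ?e = "diag_entry p m a"
  have "u2 k (dg (\<lambda>i. ?e (idx i)), B) = (\<Sum>i\<in>UNIV. ?e (idx i) ^ (k+1))"
    unfolding u2_def fst_conv mpow_dg trace_dg ..
  also have "\<dots> = (\<Sum>t<CARD('n). ?e t ^ (k+1))" by (rule sum_reidx[OF bij])
  also have "\<dots> = (\<Sum>t<2*p+m. ?e t ^ (k+1))"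
    by (rule sum_cut) (use n in \<open>auto simp: de_zero\<close>)
  finally show ?thesis by simp
qed

lemma V3:
  fixes idx :: "'n::finite \<Rightarrow> nat" and B :: "'n cmat"
  assumes bij: "bij_betw idx (UNIV::'n set) {..<CARD('n)}" and n: "2*p+m+r = CARD('n)"
    and adm: "admissible p m a"
    and ac: "(dg (\<lambda>i. diag_entry p m a (idx i)), B) \<in> anticomm_pairs"
  defines "\<beta> \<equiv> (\<lambda>t. (B ** B) $ inv_into UNIV idx t $ inv_into UNIV idx t)"
  shows "u3 k (dg (\<lambda>i. diag_entry p m a (idx i)), B) =
    (\<Sum>q<p. ((\<beta> (2*q) + \<beta> (2*q+1)) * a q ^ 2) * (a q ^ 2) ^ k)"
proof -
  let ?e = "diag_entry p m a"
  have inj: "inj idx" using bij by (simp add: bij_betw_def)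
  have acd: "\<forall>i j. (?e (idx i) + ?e (idx j)) * B $ i $ j = 0" using ac by (simp add: anticomm_dg)
  have bz: "\<beta> (2*p+j) = 0" if j: "j < m" for j
  proof -
    define i where "i = inv_into UNIV idx (2*p+j)"
    have "2*p+j \<in> idx ` UNIV" using bij j n by (auto simp: bij_betw_def)
    hence ii: "idx i = 2*p+j" unfolding i_def by (rule f_inv_into_f)
    have "(B ** B) $ i $ i = (\<Sum>l\<in>UNIV. B $ i $ l * B $ l $ i)" by (simp add: matrix_matrix_mult_def)
    also have "\<dots> = 0"
    proof (rule sum.neutral, intro ballI)
      fix l
      have "B $ i $ l = 0"
      proof (rule ccontr)
        assume "B $ i $ l \<noteq> 0"
        hence "?e (idx i) + ?e (idx l) = 0" using acd by auto
        hence "?e (idx l) = - a (p+j)" using ii j by (simp add: de_single add_eq_0_iff)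
        thus False using de_neg[OF adm j] by blast
      qed
      thus "B $ i $ l * B $ l $ i = 0" by simp
    qed
    finally show ?thesis by (simp add: \<beta>_def i_def)
  qed
  have "u3 k (dg (\<lambda>i. ?e (idx i)), B) = trace ((B ** B) ** dg (\<lambda>i. ?e (idx i) ^ (2*k+2)))"
    unfolding u3_def fst_conv snd_conv mpow_dg ..
  also have "\<dots> = (\<Sum>i\<in>UNIV. (B ** B) $ i $ i * ?e (idx i) ^ (2*k+2))" by (rule trace_mult_dg)
  also have "\<dots> = (\<Sum>i\<in>UNIV. \<beta> (idx i) * ?e (idx i) ^ (2*k+2))"
    by (simp add: \<beta>_def inv_into_f_f[OF inj])
  also have "\<dots> = (\<Sum>t<CARD('n). \<beta> t * ?e t ^ (2*k+2))" by (rule sum_reidx[OF bij])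
  also have "\<dots> = (\<Sum>t<2*p+m. \<beta> t * ?e t ^ (2*k+2))"
    by (rule sum_cut) (use n in \<open>auto simp: de_zero\<close>)
  also have "\<dots> = (\<Sum>q<p. \<beta> (2*q) * ?e (2*q) ^ (2*k+2) + \<beta> (2*q+1) * ?e (2*q+1) ^ (2*k+2))
       + (\<Sum>j<m. \<beta> (2*p+j) * ?e (2*p+j) ^ (2*k+2))"
    by (rule sum_split_de)
  also have "(\<Sum>j<m. \<beta> (2*p+j) * ?e (2*p+j) ^ (2*k+2)) = 0"
    by (rule sum.neutral) (auto simp: bz)
  also have "(\<Sum>q<p. \<beta> (2*q) * ?e (2*q) ^ (2*k+2) + \<beta> (2*q+1) * ?e (2*q+1) ^ (2*k+2))
      = (\<Sum>q<p. ((\<beta> (2*q) + \<beta> (2*q+1)) * a q ^ 2) * (a q ^ 2) ^ k)"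
  proof (rule sum.cong)
    fix q assume q: "q \<in> {..<p}"
    hence q': "q < p" by simp
    have ev: "(- a q) ^ (2*k+2) = a q ^ (2*k+2)" by (simp add: power_minus_even)
    have pw: "a q ^ (2*k+2) = a q ^ 2 * (a q ^ 2) ^ k"
    proof -
      have "a q ^ (2*k+2) = a q ^ (2 * Suc k)" by (rule arg_cong[where f="\<lambda>e. a q ^ e"]) simp
      also have "\<dots> = (a q ^ 2) ^ Suc k" by (rule power_mult)
      also have "\<dots> = a q ^ 2 * (a q ^ 2) ^ k" by (rule power_Suc)
      finally show ?thesis .
    qed
    show "\<beta> (2*q) * ?e (2*q) ^ (2*k+2) + \<beta> (2*q+1) * ?e (2*q+1) ^ (2*k+2)
      = ((\<beta> (2*q) + \<beta> (2*q+1)) * a q ^ 2) * (a q ^ 2) ^ k"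
      unfolding de_pair(1)[of q p m a, OF q'] de_pair(2)[of q p m a, OF q'] ev pw
      by (simp only: distrib_right mult.assoc)
  qed simp
  finally show ?thesis by simp
qed

definition Nm :: "('n::finite \<Rightarrow> complex) \<Rightarrow> 'n cmat \<Rightarrow> 'n cmat" where
  "Nm d B = (\<chi> i j. if d i = 0 \<and> d j = 0 then B $ i $ j else 0)"

lemma Nm_index: "Nm d B $ i $ j = (if d i = 0 \<and> d j = 0 then B $ i $ j else 0)"
  by (simp add: Nm_def)

lemma mpow_anti:
  fixes d :: "'n::finite \<Rightarrow> complex" and B :: "'n cmat" and i j :: 'n
  assumes acd: "\<forall>i j. (d i + d j) * B $ i $ j = 0"
  shows "d i * mpow B k $ i $ j = (-1) ^ k * mpow B k $ i $ j * d j"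
proof (induction k arbitrary: j)
  case 0 show ?case by (simp add: Finite_Cartesian_Product.mat_def)
next
  case (Suc k)
  have sw: "d l * B $ l $ j = - (B $ l $ j * d j)" for l
  proof -
    have "(d l + d j) * B $ l $ j = 0" using acd by blast
    thus ?thesis by (simp add: algebra_simps eq_neg_iff_add_eq_0)
  qed
  have "d i * mpow B (Suc k) $ i $ j = (\<Sum>l\<in>UNIV. (d i * mpow B k $ i $ l) * B $ l $ j)"
    by (simp add: matrix_matrix_mult_def sum_distrib_left mult.assoc)
  also have "\<dots> = (\<Sum>l\<in>UNIV. (-1) ^ k * mpow B k $ i $ l * (d l * B $ l $ j))"
    by (simp add: Suc mult.assoc)
  also have "\<dots> = (\<Sum>l\<in>UNIV. (-1) ^ Suc k * (mpow B k $ i $ l * B $ l $ j) * d j)"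
    by (simp add: sw algebra_simps)
  also have "\<dots> = (-1) ^ Suc k * mpow B (Suc k) $ i $ j * d j"
    by (simp add: matrix_matrix_mult_def sum_distrib_left sum_distrib_right)
  finally show ?case .
qed

lemma mpow_odd_diag:
  fixes d :: "'n::finite \<Rightarrow> complex" and B :: "'n cmat" and i :: 'n
  assumes acd: "\<forall>i j. (d i + d j) * B $ i $ j = 0" and di: "d i \<noteq> 0"
  shows "mpow B (2*k+1) $ i $ i = 0"
proof -
  have "d i * mpow B (2*k+1) $ i $ i = - (mpow B (2*k+1) $ i $ i * d i)"
    using mpow_anti[OF acd, of i "2*k+1" i] by simp
  hence "2 * (d i * mpow B (2*k+1) $ i $ i) = 0" by (simp add: algebra_simps)
  thus ?thesis using di by simp
qed

lemma mpow_Nm_supp: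
  fixes d :: "'n::finite \<Rightarrow> complex" and B :: "'n cmat" and i l :: 'n
  assumes "d i = 0" "mpow (Nm d B) k $ i $ l \<noteq> 0"
  shows "d l = 0"
  using assms
proof (cases k)
  case 0 thus ?thesis using assms
    by (auto simp: Finite_Cartesian_Product.mat_def split: if_splits)
next
  case (Suc k')
  from assms(2) obtain c where "Nm d B $ c $ l \<noteq> 0"
    unfolding Suc by (auto simp: matrix_matrix_mult_def intro: ccontr elim!: sum.not_neutral_contains_not_neutral)
  thus ?thesis by (auto simp: Nm_index split: if_splits)
qed

lemma mpow_Nm_eq:
  fixes d :: "'n::finite \<Rightarrow> complex" and B :: "'n cmat" and i j :: 'n
  assumes acd: "\<forall>i j. (d i + d j) * B $ i $ j = 0"
  shows "d i = 0 \<Longrightarrow> mpow B k $ i $ j = mpow (Nm d B) k $ i $ j"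
proof (induction k arbitrary: j)
  case 0 show ?case by simp
next
  case (Suc k)
  have "mpow B (Suc k) $ i $ j = (\<Sum>l\<in>UNIV. mpow (Nm d B) k $ i $ l * B $ l $ j)"
    using Suc by (simp add: matrix_matrix_mult_def)
  also have "\<dots> = (\<Sum>l\<in>UNIV. mpow (Nm d B) k $ i $ l * Nm d B $ l $ j)"
  proof (rule sum.cong)
    fix l
    show "mpow (Nm d B) k $ i $ l * B $ l $ j = mpow (Nm d B) k $ i $ l * Nm d B $ l $ j"
    proof (cases "mpow (Nm d B) k $ i $ l = 0")
      case False
      hence dl: "d l = 0" using mpow_Nm_supp[OF Suc.prems False] by simp
      have "B $ l $ j = Nm d B $ l $ j"
      proof (cases "d j = 0")
        case True thus ?thesis using dl by (simp add: Nm_index)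
      next
        case False
        have "(d l + d j) * B $ l $ j = 0" using acd by blast
        thus ?thesis using dl False by (simp add: Nm_index)
      qed
      thus ?thesis by simp
    qed simp
  qed simp
  also have "\<dots> = mpow (Nm d B) (Suc k) $ i $ j" by (simp add: matrix_matrix_mult_def)
  finally show ?case .
qed

lemma V5:
  fixes d :: "'n::finite \<Rightarrow> complex" and B :: "'n cmat"
  assumes ac: "(dg d, B) \<in> anticomm_pairs"
  shows "u5 k (dg d, B) = trace (mpow (Nm d B) (2*k+1))"
proof -
  have acd: "\<forall>i j. (d i + d j) * B $ i $ j = 0" using ac by (simp add: anticomm_dg)
  have "u5 k (dg d, B) = (\<Sum>i\<in>UNIV. mpow B (2*k+1) $ i $ i)" by (simp add: u5_def trace_def)
  also have "\<dots> = (\<Sum>i\<in>UNIV. mpow (Nm d B) (2*k+1) $ i $ i)"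
  proof (rule sum.cong)
    fix i :: 'n
    show "mpow B (2*k+1) $ i $ i = mpow (Nm d B) (2*k+1) $ i $ i"
    proof (cases "d i = 0")
      case True thus ?thesis by (rule mpow_Nm_eq[OF acd])
    next
      case False
      have "mpow (Nm d B) (2*k+1) $ i $ i = 0"
        using False by (simp add: matrix_matrix_mult_def Nm_index)
      thus ?thesis using mpow_odd_diag[OF acd False] by simp
    qed
  qed simp
  also have "\<dots> = trace (mpow (Nm d B) (2*k+1))" by (simp add: trace_def)
  finally show ?thesis .
qed




lemma G1:
  fixes A B :: "'n::finite cmat"
  assumes "(A,B) \<in> anticomm_pairs" "A \<in> type_diag p m r" "m < N"
  shows "\<exists>c y (s'::nat). s' < N \<and> (\<forall>k. u1 k (A,B) = (\<Sum>l<s'. c l * y l ^ k))"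
proof -
  obtain idx a where h: "2 * p + m + r = CARD('n)" "bij_betw idx (UNIV :: 'n set) {..<CARD('n)}"
    "admissible p m a" "A = dg (\<lambda>i. diag_entry p m a (idx i))" using type_diagE[OF assms(2)] by blast
  show ?thesis
    by (rule exI[of _ "\<lambda>j. a (p+j)"], rule exI[of _ "\<lambda>j. a (p+j) ^ 2"], rule exI[of _ m])
      (use assms(3) V1[OF h(2) h(1)] h(4) in auto)
qed

lemma G2:
  fixes A B :: "'n::finite cmat"
  assumes "(A,B) \<in> anticomm_pairs" "A \<in> type_diag p m r" "2*p+m < N"
  shows "\<exists>c y (s'::nat). s' < N \<and> (\<forall>k. u2 k (A,B) = (\<Sum>l<s'. c l * y l ^ k))"
proof -
  obtain idx a where h: "2 * p + m + r = CARD('n)" "bij_betw idx (UNIV :: 'n set) {..<CARD('n)}"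
    "admissible p m a" "A = dg (\<lambda>i. diag_entry p m a (idx i))" using type_diagE[OF assms(2)] by blast
  show ?thesis
    by (rule exI[of _ "diag_entry p m a"], rule exI[of _ "diag_entry p m a"], rule exI[of _ "2*p+m"])
      (use assms(3) V2[OF h(2) h(1)] h(4) in auto)
qed

lemma G3:
  fixes A B :: "'n::finite cmat"
  assumes "(A,B) \<in> anticomm_pairs" "A \<in> type_diag p m r" "p < N"
  shows "\<exists>c y (s'::nat). s' < N \<and> (\<forall>k. u3 k (A,B) = (\<Sum>l<s'. c l * y l ^ k))"
proof -
  obtain idx a where h: "2 * p + m + r = CARD('n)" "bij_betw idx (UNIV :: 'n set) {..<CARD('n)}"
    "admissible p m a" "A = dg (\<lambda>i. diag_entry p m a (idx i))" using type_diagE[OF assms(2)] by blast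
  have ac: "(dg (\<lambda>i. diag_entry p m a (idx i)), B) \<in> anticomm_pairs" using assms(1) h(4) by simp
  define \<beta> where "\<beta> = (\<lambda>t. (B ** B) $ inv_into UNIV idx t $ inv_into UNIV idx t)"
  show ?thesis
    by (rule exI[of _ "\<lambda>q. (\<beta> (2*q) + \<beta> (2*q+1)) * a q ^ 2"], rule exI[of _ "\<lambda>q. a q ^ 2"],
        rule exI[of _ p])
      (use assms(3) V3[OF h(2) h(1) h(3) ac] h(4) in \<open>auto simp: \<beta>_def\<close>)
qed

lemma G5:
  fixes A B :: "'n::finite cmat"
  assumes "(A,B) \<in> anticomm_pairs" "A \<in> type_diag p m r" "r < N"
  shows "\<exists>c y (s'::nat). s' < N \<and> (\<forall>k. u5 k (A,B) = (\<Sum>l<s'. c l * y l ^ k))"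
proof -
  obtain idx a where h: "2 * p + m + r = CARD('n)" "bij_betw idx (UNIV :: 'n set) {..<CARD('n)}"
    "admissible p m a" "A = dg (\<lambda>i. diag_entry p m a (idx i))" using type_diagE[OF assms(2)] by blast
  define d where "d = (\<lambda>i. diag_entry p m a (idx i))"
  have ac: "(dg d, B) \<in> anticomm_pairs" using assms(1) h(4) by (simp add: d_def)
  define S where "S = {i. d i = 0}"
  have supp: "\<forall>i j. Nm d B $ i $ j \<noteq> 0 \<longrightarrow> i \<in> S \<and> j \<in> S"
    by (auto simp: Nm_index S_def split: if_splits)
  obtain lam where lam: "\<forall>k>0. trace (mpow (Nm d B) k) = (\<Sum>l<card S. lam l ^ k)"
    using supported_power_sums[OF supp] by blast
  have cardS: "card S \<le> r"
  proof -
    have inj: "inj_on idx S" using h(2) by (auto simp: bij_betw_def inj_on_def)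
    have "idx ` S \<subseteq> {2*p+m..<CARD('n)}"
    proof
      fix t assume "t \<in> idx ` S"
      then obtain i where i: "i \<in> S" "t = idx i" by blast
      have "t < CARD('n)" using h(2) i by (auto simp: bij_betw_def)
      moreover have "\<not> t < 2*p+m" using de_nz[OF h(3)] i by (auto simp: S_def d_def)
      ultimately show "t \<in> {2*p+m..<CARD('n)}" by simp
    qed
    from card_inj_on_le[OF inj this] have "card S \<le> card {2*p+m..<CARD('n)}" by simp
    thus ?thesis using h(1) by simp
  qed
  have "\<forall>k. u5 k (A,B) = (\<Sum>l<card S. lam l * (lam l ^ 2) ^ k)"
  proof
    fix k
    have "u5 k (A,B) = trace (mpow (Nm d B) (2*k+1))" using V5[OF ac] h(4) by (simp add: d_def)
    also have "\<dots> = (\<Sum>l<card S. lam l ^ (2*k+1))" using lam[rule_format, of "2*k+1"] by (simp only: zero_less_Suc add_Suc_right add_0_right simp_thms)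
    also have "\<dots> = (\<Sum>l<card S. lam l * (lam l ^ 2) ^ k)" by (simp only: pow_odd_split)
    finally show "u5 k (A,B) = (\<Sum>l<card S. lam l * (lam l ^ 2) ^ k)" .
  qed
  thus ?thesis using cardS assms(3) by (intro exI[of _ lam] exI[of _ "\<lambda>l. lam l ^ 2"] exI[of _ "card S"]) auto
qed

lemma of_nat_neg_complex: "(of_nat a :: complex) = - of_nat b \<Longrightarrow> a = 0 \<and> b = 0"
proof -
  assume e: "(of_nat a :: complex) = - of_nat b"
  have "(of_nat (a + b) :: complex) = of_nat a + of_nat b" by simp
  also have "\<dots> = 0" using e by simp
  finally have "a + b = 0" by (simp only: of_nat_eq_0_iff)
  thus ?thesis by simp
qed

definition a0 :: "nat \<Rightarrow> complex" where "a0 t = of_nat (t + 1)"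

lemma a0_adm: "admissible p m a0"
  unfolding admissible_def a0_def
proof (intro conjI allI impI)
  fix i j :: nat
  show "(of_nat (i+1) :: complex) \<noteq> 0" by (simp only: of_nat_eq_0_iff) simp?
  assume "i \<noteq> j"
  thus "(of_nat (i+1) :: complex) \<noteq> of_nat (j+1)" by (simp only: of_nat_eq_iff) simp?
  show "(of_nat (i+1) :: complex) \<noteq> - of_nat (j+1)" using of_nat_neg_complex[of "i+1" "j+1"] by auto
qed

lemma sq_of_nat_inj: "inj_on (\<lambda>j. (of_nat (f j) :: complex) ^ 2) A \<longleftrightarrow> inj_on (\<lambda>j. f j ^ 2) A"
  by (simp add: inj_on_def of_nat_power[symmetric] del: of_nat_power)

lemma de_inj:
  assumes adm: "admissible p m a"
  shows "inj_on (diag_entry p m a) {..<2*p+m}"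
proof (rule inj_onI, rule ccontr)
  fix t1 t2 assume t: "t1 \<in> {..<2*p+m}" "t2 \<in> {..<2*p+m}"
    and e: "diag_entry p m a t1 = diag_entry p m a t2" and ne: "t1 \<noteq> t2"
  have ex: "\<exists>i<p+m. \<exists>s::bool. diag_entry p m a t = (if s then a i else - a i) \<and>
      (t < 2*p \<longrightarrow> i = t div 2 \<and> (s \<longleftrightarrow> even t)) \<and> (2*p \<le> t \<longrightarrow> i = t - p \<and> s)"
    if "t < 2*p+m" for t
  proof (cases "t < 2*p")
    case True thus ?thesis
      by (intro exI[of _ "t div 2"] conjI exI[of _ "even t"]) (auto simp: diag_entry_def)
  next
    case False thus ?thesis using that
      by (intro exI[of _ "t - p"] conjI exI[of _ True]) (auto simp: diag_entry_def)
  qed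
  obtain i1 s1 where h1: "i1 < p+m" "diag_entry p m a t1 = (if s1 then a i1 else - a i1)"
    "t1 < 2*p \<longrightarrow> i1 = t1 div 2 \<and> (s1 \<longleftrightarrow> even t1)" "2*p \<le> t1 \<longrightarrow> i1 = t1 - p \<and> s1"
    using ex[of t1] t by auto
  obtain i2 s2 where h2: "i2 < p+m" "diag_entry p m a t2 = (if s2 then a i2 else - a i2)"
    "t2 < 2*p \<longrightarrow> i2 = t2 div 2 \<and> (s2 \<longleftrightarrow> even t2)" "2*p \<le> t2 \<longrightarrow> i2 = t2 - p \<and> s2"
    using ex[of t2] t by auto
  have nz: "a i1 \<noteq> 0" "a i2 \<noteq> 0" using adm_nz[OF adm] h1(1) h2(1) by auto
  show False
  proof (cases "i1 = i2")
    case True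
    have "s1 \<noteq> s2"
    proof
      assume "s1 = s2"
      have "t1 = t2"
      proof (cases "t1 < 2*p")
        case c1: True
        show ?thesis
        proof (cases "t2 < 2*p")
          case True
          have a1: "i1 = t1 div 2 \<and> (s1 \<longleftrightarrow> even t1)" using c1 h1(3) by blast
          have a2: "i2 = t2 div 2 \<and> (s2 \<longleftrightarrow> even t2)" using True h2(3) by blast
          from a1 a2 \<open>i1 = i2\<close> \<open>s1 = s2\<close> show ?thesis by presburger
        next
          case False
          with c1 h1 h2 \<open>i1 = i2\<close> show ?thesis by auto
        qed
      next
        case c1: False
        show ?thesis
        proof (cases "t2 < 2*p")
          case True
          with c1 h1 h2 \<open>i1 = i2\<close> show ?thesis by auto
        next
          case False
          with c1 h1 h2 \<open>i1 = i2\<close> show ?thesis by auto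
        qed
      qed
      with ne show False by simp
    qed
    hence "a i1 = - a i1" using e h1(2) h2(2) True by (cases s1) auto
    thus False using self_neg_zero nz by blast
  next
    case False
    have "a i1 \<noteq> a i2 \<and> a i1 \<noteq> - a i2" by (rule adm_ne[OF adm h1(1) h2(1) False])
    moreover have "a i2 \<noteq> - a i1" using calculation by auto
    ultimately show False using e h1(2) h2(2) by (cases s1; cases s2) auto
  qed
qed

lemma partner_sum:
  assumes "t1 < 2*p" "t2 < 2*p" "t1 div 2 = t2 div 2" "t1 \<noteq> t2"
  shows "diag_entry p m a t1 + diag_entry p m a t2 = 0"
proof -
  have "even t1 \<longleftrightarrow> \<not> even t2" using assms(3,4) by presburger
  thus ?thesis using assms by (auto simp: diag_entry_def)
qed

lemma sum_tail:
  fixes F :: "nat \<Rightarrow> complex"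
  assumes "\<forall>t<M. F t = 0"
  shows "(\<Sum>t<M+r. F t) = (\<Sum>j<r. F (M+j))"
proof (induction r)
  case 0 show ?case using assms by simp
next
  case (Suc r) thus ?case by simp
qed

lemma partner_iff:
  fixes s t p :: nat
  assumes tp: "t < 2*p"
  shows "(s < 2*p \<and> s div 2 = t div 2 \<and> s \<noteq> t) \<longleftrightarrow> s = (if even t then t+1 else t-1)"
proof -
  have sd: "2 * (s div 2) + s mod 2 = s" by (rule mult_div_mod_eq)
  have td: "2 * (t div 2) + t mod 2 = t" by (rule mult_div_mod_eq)
  have sm: "s mod 2 = 0 \<or> s mod 2 = 1" using not_mod_2_eq_0_eq_1[of s] by blast
  have tm: "t mod 2 = 0 \<or> t mod 2 = 1" using not_mod_2_eq_0_eq_1[of t] by blast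
  have ev: "even t \<longleftrightarrow> t mod 2 = 0" by (rule even_iff_mod_2_eq_zero)
  have par: "2 * x \<noteq> 2 * y + 1" for x y :: nat by presburger
  show ?thesis
  proof (cases "t mod 2 = 0")
    case T: True
    hence et: "even t" using ev by simp
    show ?thesis
    proof
      assume h: "s < 2*p \<and> s div 2 = t div 2 \<and> s \<noteq> t"
      have "s mod 2 = 1" using h sm sd td T by auto
      thus "s = (if even t then t+1 else t-1)" using et h sd td T by simp
    next
      assume "s = (if even t then t+1 else t-1)"
      hence h: "s = t + 1" using et by simp
      have "s mod 2 = 1"
      proof (rule ccontr)
        assume "s mod 2 \<noteq> 1"
        hence "s mod 2 = 0" using sm by simp
        hence "2 * (s div 2) = 2 * (t div 2) + 1" using sd td T h by simp
        thus False using par by blast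
      qed
      hence "s div 2 = t div 2" using sd td T h by simp
      moreover have "s < 2*p"
      proof (rule ccontr)
        assume "\<not> s < 2*p"
        hence "t = 2*p - 1" using h tp by simp
        hence "2 * (t div 2) = 2 * (p - 1) + 1" using td T tp by simp
        thus False using par by blast
      qed
      ultimately show "s < 2*p \<and> s div 2 = t div 2 \<and> s \<noteq> t" using h by simp
    qed
  next
    case F: False
    hence T1: "t mod 2 = 1" using tm by simp
    hence et: "\<not> even t" using ev by simp
    show ?thesis
    proof
      assume h: "s < 2*p \<and> s div 2 = t div 2 \<and> s \<noteq> t"
      have "s mod 2 = 0" using h sm sd td T1 by auto
      thus "s = (if even t then t+1 else t-1)" using et h sd td T1 by simp
    next
      assume "s = (if even t then t+1 else t-1)"
      hence h: "s = t - 1" using et by simp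
      have t1: "t \<ge> 1" using td T1 by simp
      have "s mod 2 = 0"
      proof (rule ccontr)
        assume "s mod 2 \<noteq> 0"
        hence "s mod 2 = 1" using sm by simp
        hence "2 * (s div 2) + 2 = 2 * (t div 2) + 1" using sd td T1 h t1 by simp
        hence "2 * (s div 2 + 1) = 2 * (t div 2) + 1" by simp
        thus False using par by blast
      qed
      have "s = 2 * (t div 2)" using td T1 h by simp
      hence "s div 2 = t div 2" by simp
      moreover have "s < 2*p" using h tp by linarith
      moreover have "s \<noteq> t" using h t1 by linarith
      ultimately show "s < 2*p \<and> s div 2 = t div 2 \<and> s \<noteq> t" by simp
    qed
  qed
qed

lemma nat_sq_inj: "inj_on (\<lambda>j. (f j :: nat) ^ 2) A \<longleftrightarrow> inj_on f A"
  by (auto simp: inj_on_def dest: power_eq_imp_eq_base)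

lemma sepw:
  fixes u :: "nat \<Rightarrow> 'n::finite cmat \<times> 'n cmat \<Rightarrow> complex" and N :: nat
    and cpt ypt :: "nat \<Rightarrow> complex"
  assumes pf: "\<And>k. u k \<in> poly_fun"
    and inv: "\<And>k g x. invertible g \<Longrightarrow> u k (conj_pair g x) = u k x"
    and gen: "\<And>A B. (A,B) \<in> anticomm_pairs \<Longrightarrow> A \<in> type_diag p' m' r' \<Longrightarrow>
                \<exists>c y (s'::nat). s' < N \<and> (\<forall>k. u k (A,B) = (\<Sum>l<s'. c l * y l ^ k))"
    and x0: "xpt \<in> Zpmr p m r"
    and v0: "\<forall>k. u k xpt = (\<Sum>l<N. cpt l * ypt l ^ k)" and i0: "inj_on ypt {..<N}"
    and n0: "\<forall>l<N. cpt l \<noteq> 0"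
  shows "\<not> (Zpmr p m r :: ('n cmat \<times> 'n cmat) set) \<subseteq> Zpmr p' m' r'"
  by (rule sep[OF pf inv gen x0 v0 i0 n0])

lemma main_sep:
  assumes "(p,m,r) \<in> TP CARD('n::finite)" "(p',m',r') \<in> TP CARD('n)" "(p,m,r) \<noteq> (p',m',r')"
  shows "\<not> ((Zpmr p m r :: ('n cmat \<times> 'n cmat) set) \<subseteq> Zpmr p' m' r')"
proof -
  have n: "2*p+m+r = CARD('n)" "2*p'+m'+r' = CARD('n)" using assms by (auto simp: TP_def)
  obtain idx0 :: "'n \<Rightarrow> nat" where bij: "bij_betw idx0 UNIV {..<CARD('n)}"
    using ex_bij_betw_finite_nat[of "UNIV::'n set"] by (auto simp: atLeast0LessThan)
  define e0 where "e0 = diag_entry p m a0"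
  define d0 where "d0 = (\<lambda>i. e0 (idx0 i))"
  define B0 :: "'n cmat" where "B0 = (\<chi> i j. if i = j \<and> 2*p+m \<le> idx0 i then of_nat (idx0 i + 1)
      else if idx0 i < 2*p \<and> idx0 j < 2*p \<and> idx0 i div 2 = idx0 j div 2 \<and> i \<noteq> j then 1 else 0)"
  have inj: "inj idx0" using bij by (simp add: bij_betw_def)
  have D0: "dg d0 \<in> type_diag p m r" unfolding d0_def e0_def by (rule type_diagI[OF n(1) bij a0_adm])
  have d0z: "d0 i = 0 \<longleftrightarrow> 2*p+m \<le> idx0 i" for i
    using de_nz[OF a0_adm, of "idx0 i" p m] de_zero[of p m "idx0 i" a0] unfolding d0_def e0_def
    by (metis not_less)
  have ac: "(dg d0, B0) \<in> anticomm_pairs"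
    unfolding anticomm_dg
  proof (intro allI)
    fix i j
    show "(d0 i + d0 j) * B0 $ i $ j = 0"
    proof (cases "i = j \<and> 2*p+m \<le> idx0 i")
      case True
      hence "d0 i = 0" "d0 j = 0" using d0z by auto
      thus ?thesis by simp
    next
      case False
      show ?thesis
      proof (cases "idx0 i < 2*p \<and> idx0 j < 2*p \<and> idx0 i div 2 = idx0 j div 2 \<and> i \<noteq> j")
        case True
        have "idx0 i \<noteq> idx0 j" using True inj by (auto simp: inj_eq)
        hence "d0 i + d0 j = 0" using True partner_sum unfolding d0_def e0_def by blast
        thus ?thesis by simp
      next
        case F2: False
        have "B0 $ i $ j = (if i = j \<and> 2*p+m \<le> idx0 i then of_nat (idx0 i + 1)
          else if idx0 i < 2*p \<and> idx0 j < 2*p \<and> idx0 i div 2 = idx0 j div 2 \<and> i \<noteq> j then 1 else 0)"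
          unfolding B0_def by simp
        also have "\<dots> = 0" by (simp only: if_not_P[OF False] if_not_P[OF F2])
        finally show ?thesis by simp
      qed
    qed
  qed
  have x0: "(dg d0, B0) \<in> Zpmr p m r" by (rule in_Zpmr[OF ac D0])
  have cases: "m' < m \<or> 2*p'+m' < 2*p+m \<or> p' < p \<or> r' < r"
  proof (rule ccontr)
    assume "\<not> ?thesis"
    hence "p = p'" "m = m'" "r = r'" using n by linarith+
    thus False using assms(3) by simp
  qed
  show ?thesis
  proof -
    { assume c: "m' < m"
      have ?thesis
      proof (rule sepw[where u=u1 and N=m and xpt="(dg d0, B0)" and cpt="\<lambda>j. a0 (p+j)"
            and ypt="\<lambda>j. a0 (p+j) ^ 2"])
        show "\<And>k. u1 k \<in> poly_fun" by (rule u_pf)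
        show "\<And>k g x. invertible g \<Longrightarrow> u1 k (conj_pair g x) = u1 k x" by (rule u_inv)
        show "\<exists>c y (s'::nat). s' < m \<and> (\<forall>k. u1 k (A,B) = (\<Sum>l<s'. c l * y l ^ k))"
          if "(A,B) \<in> anticomm_pairs" "A \<in> type_diag p' m' r'" for A B :: "'n cmat"
          by (rule G1[OF that c])
        show "(dg d0, B0) \<in> Zpmr p m r" by (rule x0)
        show "\<forall>k. u1 k (dg d0, B0) = (\<Sum>l<m. a0 (p+l) * (a0 (p+l) ^ 2) ^ k)"
          using V1[OF bij n(1)] unfolding d0_def e0_def by simp
        show "inj_on (\<lambda>j. a0 (p+j) ^ 2) {..<m}"
          unfolding a0_def sq_of_nat_inj nat_sq_inj by (auto simp: inj_on_def)
        show "\<forall>l<m. a0 (p+l) \<noteq> 0" using a0_adm[of p m] by (auto simp: admissible_def)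
      qed }
    moreover
    { assume c: "2*p'+m' < 2*p+m"
      have ?thesis
      proof (rule sepw[where u=u2 and N="2*p+m" and xpt="(dg d0, B0)" and cpt=e0 and ypt=e0])
        show "\<And>k. u2 k \<in> poly_fun" by (rule u_pf)
        show "\<And>k g x. invertible g \<Longrightarrow> u2 k (conj_pair g x) = u2 k x" by (rule u_inv)
        show "\<exists>c y (s'::nat). s' < 2*p+m \<and> (\<forall>k. u2 k (A,B) = (\<Sum>l<s'. c l * y l ^ k))"
          if "(A,B) \<in> anticomm_pairs" "A \<in> type_diag p' m' r'" for A B :: "'n cmat"
          by (rule G2[OF that c])
        show "(dg d0, B0) \<in> Zpmr p m r" by (rule x0)
        show "\<forall>k. u2 k (dg d0, B0) = (\<Sum>l<2*p+m. e0 l * e0 l ^ k)"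
          using V2[OF bij n(1)] unfolding d0_def e0_def by simp
        show "inj_on e0 {..<2*p+m}" unfolding e0_def by (rule de_inj[OF a0_adm])
        show "\<forall>l<2*p+m. e0 l \<noteq> 0" unfolding e0_def using de_nz[OF a0_adm] by blast
      qed }
    moreover
    { assume c: "p' < p"
      define \<beta> where "\<beta> = (\<lambda>t. (B0 ** B0) $ inv_into UNIV idx0 t $ inv_into UNIV idx0 t)"
      have beta: "(B0 ** B0) $ i $ i = 1" if ti: "idx0 i < 2*p" for i
      proof -
        define pt where "pt = (if even (idx0 i) then idx0 i + 1 else idx0 i - 1)"
        have pt: "pt < CARD('n)" using ti n(1) unfolding pt_def by auto
        have piff: "(idx0 l < 2*p \<and> idx0 l div 2 = idx0 i div 2 \<and> idx0 l \<noteq> idx0 i) \<longleftrightarrow> idx0 l = pt" for l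
          unfolding pt_def by (rule partner_iff[OF ti])
        have ineq: "(i \<noteq> l) \<longleftrightarrow> (idx0 l \<noteq> idx0 i)" for l using inj_eq[OF inj, of l i] by blast
        have B0r: "B0 $ i $ l = (if idx0 l = pt then 1 else 0)" for l
        proof -
          have c1: "\<not> (i = l \<and> 2*p+m \<le> idx0 i)" using ti by linarith
          have c2: "(idx0 i < 2*p \<and> idx0 l < 2*p \<and> idx0 i div 2 = idx0 l div 2 \<and> i \<noteq> l) \<longleftrightarrow> idx0 l = pt"
            using piff[of l] ineq[of l] ti by auto
          show ?thesis unfolding B0_def vec_lambda_beta if_not_P[OF c1] c2 ..
        qed
        have B0c: "B0 $ l $ i = (if idx0 l = pt then 1 else 0)" for l
        proof -
          have c1: "\<not> (l = i \<and> 2*p+m \<le> idx0 l)" using ti by auto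
          have c2: "(idx0 l < 2*p \<and> idx0 i < 2*p \<and> idx0 l div 2 = idx0 i div 2 \<and> l \<noteq> i) \<longleftrightarrow> idx0 l = pt"
            using piff[of l] ineq[of l] ti by auto
          show ?thesis unfolding B0_def vec_lambda_beta if_not_P[OF c1] c2 ..
        qed
        have "(B0 ** B0) $ i $ i = (\<Sum>l\<in>UNIV. B0 $ i $ l * B0 $ l $ i)"
          by (simp add: matrix_matrix_mult_def)
        also have "\<dots> = (\<Sum>l\<in>UNIV. (\<lambda>s. if s = pt then 1 else 0) (idx0 l))"
          unfolding B0r B0c by (intro sum.cong refl) simp
        also have "\<dots> = (\<Sum>s<CARD('n). if s = pt then (1::complex) else 0)" by (rule sum_reidx[OF bij])
        also have "\<dots> = 1" using pt by simp
        finally show ?thesis .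
      qed
      have bt: "\<beta> t = 1" if "t < 2*p" for t
      proof -
        have "t \<in> idx0 ` UNIV" using bij that n(1) by (auto simp: bij_betw_def)
        hence "idx0 (inv_into UNIV idx0 t) = t" by (rule f_inv_into_f)
        thus ?thesis unfolding \<beta>_def using beta[of "inv_into UNIV idx0 t"] that by simp
      qed
      have ac': "(dg (\<lambda>i. diag_entry p m a0 (idx0 i)), B0) \<in> anticomm_pairs"
        using ac unfolding d0_def e0_def .
      have ?thesis
      proof (rule sepw[where u=u3 and N=p and xpt="(dg d0, B0)"
            and cpt="\<lambda>q. (\<beta> (2*q) + \<beta> (2*q+1)) * a0 q ^ 2" and ypt="\<lambda>q. a0 q ^ 2"])
        show "\<And>k. u3 k \<in> poly_fun" by (rule u_pf)
        show "\<And>k g x. invertible g \<Longrightarrow> u3 k (conj_pair g x) = u3 k x" by (rule u_inv)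
        show "\<exists>c y (s'::nat). s' < p \<and> (\<forall>k. u3 k (A,B) = (\<Sum>l<s'. c l * y l ^ k))"
          if "(A,B) \<in> anticomm_pairs" "A \<in> type_diag p' m' r'" for A B :: "'n cmat"
          by (rule G3[OF that c])
        show "(dg d0, B0) \<in> Zpmr p m r" by (rule x0)
        show "\<forall>k. u3 k (dg d0, B0) = (\<Sum>l<p. ((\<beta> (2*l) + \<beta> (2*l+1)) * a0 l ^ 2) * (a0 l ^ 2) ^ k)"
          using V3[OF bij n(1) a0_adm ac'] unfolding d0_def e0_def \<beta>_def by simp
        show "inj_on (\<lambda>j. a0 j ^ 2) {..<p}"
          unfolding a0_def sq_of_nat_inj nat_sq_inj by (auto simp: inj_on_def)
        show "\<forall>l<p. (\<beta> (2*l) + \<beta> (2*l+1)) * a0 l ^ 2 \<noteq> 0"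
        proof (intro allI impI)
          fix l assume l: "l < p"
          have "\<beta> (2*l) = 1" "\<beta> (2*l+1) = 1" using bt l by auto
          moreover have "a0 l \<noteq> 0" using a0_adm[of p m] l by (auto simp: admissible_def)
          ultimately show "(\<beta> (2*l) + \<beta> (2*l+1)) * a0 l ^ 2 \<noteq> 0" by simp
        qed
      qed }
    moreover
    { assume c: "r' < r"
      define g0 where "g0 = (\<lambda>i. if 2*p+m \<le> idx0 i then (of_nat (idx0 i + 1) :: complex) else 0)"
      have Nmd: "Nm d0 B0 = dg g0"
      proof (rule fcp_vec_eqI, rule fcp_vec_eqI)
        fix i j
        have B0ij: "B0 $ i $ j = (if i = j \<and> 2*p+m \<le> idx0 i then of_nat (idx0 i + 1)
          else if idx0 i < 2*p \<and> idx0 j < 2*p \<and> idx0 i div 2 = idx0 j div 2 \<and> i \<noteq> j then 1 else 0)"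
          unfolding B0_def by (simp only: vec_lambda_beta)
        show "Nm d0 B0 $ i $ j = dg g0 $ i $ j"
        proof (cases "2*p+m \<le> idx0 i \<and> 2*p+m \<le> idx0 j")
          case True
          have "Nm d0 B0 $ i $ j = B0 $ i $ j" using True d0z by (simp add: Nm_index)
          also have "\<dots> = dg g0 $ i $ j"
          proof (cases "i = j")
            case True2: True
            have "B0 $ i $ j = of_nat (idx0 i + 1)" using True True2 B0ij by simp
            moreover have "dg g0 $ i $ j = of_nat (idx0 i + 1)" using True True2 by (simp add: dg_index g0_def)
            ultimately show ?thesis by simp
          next
            case False2: False
            have nc: "\<not> (idx0 i < 2*p)" using True by linarith
            have "B0 $ i $ j = 0" using False2 nc B0ij by simp
            moreover have "dg g0 $ i $ j = 0" using False2 by (simp add: dg_index)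
            ultimately show ?thesis by simp
          qed
          finally show ?thesis .
        next
          case False
          have nd: "\<not> (d0 i = 0 \<and> d0 j = 0)" using False d0z by simp
          have "Nm d0 B0 $ i $ j = 0" unfolding Nm_index if_not_P[OF nd] ..
          moreover have "dg g0 $ i $ j = 0"
          proof (cases "i = j")
            case True thus ?thesis using False by (simp add: dg_index g0_def)
          next
            case False thus ?thesis by (simp add: dg_index)
          qed
          ultimately show ?thesis by simp
        qed
      qed
      have val: "\<forall>k. u5 k (dg d0, B0) = (\<Sum>j<r. of_nat (2*p+m+j+1) * ((of_nat (2*p+m+j+1) :: complex) ^ 2) ^ k)"
      proof
        fix k
        let ?G = "\<lambda>t. (if 2*p+m \<le> t then (of_nat (t + 1) :: complex) else 0) ^ (2*k+1)"
        have "u5 k (dg d0, B0) = trace (mpow (dg g0) (2*k+1))" using V5[OF ac] Nmd by simp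
        also have "\<dots> = (\<Sum>i\<in>UNIV. ?G (idx0 i))" unfolding mpow_dg trace_dg g0_def ..
        also have "\<dots> = (\<Sum>t<CARD('n). ?G t)" by (rule sum_reidx[OF bij])
        also have "\<dots> = (\<Sum>j<r. ?G (2*p+m+j))"
          unfolding n(1)[symmetric] by (rule sum_tail) simp
        also have "\<dots> = (\<Sum>j<r. of_nat (2*p+m+j+1) * ((of_nat (2*p+m+j+1) :: complex) ^ 2) ^ k)"
          by (simp only: pow_odd_split le_add1 if_True)
        finally show "u5 k (dg d0, B0) = (\<Sum>j<r. of_nat (2*p+m+j+1) * ((of_nat (2*p+m+j+1) :: complex) ^ 2) ^ k)" .
      qed
      have ?thesis
      proof (rule sepw[where u=u5 and N=r and xpt="(dg d0, B0)" and cpt="\<lambda>j. of_nat (2*p+m+j+1)"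
            and ypt="\<lambda>j. (of_nat (2*p+m+j+1)) ^ 2"])
        show "\<And>k. u5 k \<in> poly_fun" by (rule u_pf)
        show "\<And>k g x. invertible g \<Longrightarrow> u5 k (conj_pair g x) = u5 k x" by (rule u_inv)
        show "\<exists>c y (s'::nat). s' < r \<and> (\<forall>k. u5 k (A,B) = (\<Sum>l<s'. c l * y l ^ k))"
          if "(A,B) \<in> anticomm_pairs" "A \<in> type_diag p' m' r'" for A B :: "'n cmat"
          by (rule G5[OF that c])
        show "(dg d0, B0) \<in> Zpmr p m r" by (rule x0)
        show "\<forall>k. u5 k (dg d0, B0) = (\<Sum>l<r. of_nat (2*p+m+l+1) * ((of_nat (2*p+m+l+1)) ^ 2) ^ k)"
          by (rule val)
        show "inj_on (\<lambda>j. (of_nat (2*p+m+j+1) :: complex) ^ 2) {..<r}"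
          unfolding sq_of_nat_inj nat_sq_inj by (auto simp: inj_on_def)
        show "\<forall>l<r. (of_nat (2*p+m+l+1) :: complex) \<noteq> 0"
        proof (intro allI impI)
          fix l
          have "2*p+m+l+1 \<noteq> (0::nat)" by simp
          thus "(of_nat (2*p+m+l+1) :: complex) \<noteq> 0" by (metis of_nat_eq_0_iff)
        qed
      qed }
    ultimately show ?thesis using cases by blast
  qed
qed

theorem proposition5p5:
  fixes p m r p' m' r' :: nat
  assumes "(p, m, r) \<in> TP CARD('n::finite)"
    and "(p', m', r') \<in> TP CARD('n)"
    and "(p, m, r) \<noteq> (p', m', r')"
  shows "\<not> ((Zpmr p m r :: ('n cmat \<times> 'n cmat) set) \<subseteq> Zpmr p' m' r')
       \<and> \<not> ((Zpmr p' m' r' :: ('n cmat \<times> 'n cmat) set) \<subseteq> Zpmr p m r)"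
  using main_sep[OF assms(1,2,3)] main_sep[OF assms(2,1)] assms(3) by auto


end
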